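(* For all integers $n\ge0$, $$f(n,s,q)=\sum_{j=0}^n(-1)^j\begin{bmatrix} n\\ j\end{bmatrix}_q\frac{\prod_{i=0}^{j-1}(q^{2i+1}-s)}{(-q;q)_j},$$ $$F(2n,s,q)=\sum_{k=0}^n\begin{bmatrix} n\\ k\end{bmatrix}_{q^2}\frac{\prod_{j=0}^{2k-1}(q^j-s)}{(q;q^2)_k},\qquad F(2n+1,s,q)=\sum_{k=0}^n\begin{bmatrix} n\\ k\end{bmatrix}_{q^2}\frac{\prod_{j=0}^{2k}(q^j-s)}{(q;q^2)_{k+1}}.$$
   Context: $q$ is an indeterminate. $(x;q)_n=\prod_{j=0}^{n-1}(1-q^jx)$. The Gaussian binomial coefficient is $\begin{bmatrix} n\\ j\end{bmatrix}_q=\frac{(q;q)_n}{(q;q)_j(q;q)_{n-j}}$ for $0\le j\le n$ and $0$ otherwise. The normalized Rogers–Szegö polynomials are $f(n,s,q)=\dfrac{\sum_{j=0}^n s^j\begin{bmatrix} n\\ j\end{bmatrix}_{q^2}}{(-q;q)_n}$ and $F(n,s,q)=\dfrac{\sum_{j=0}^n(-s)^j\begin{bmatrix} n\\ j\end{bmatrix}_{q}}{(q;q^2)_{\lfloor (n+1)/2\rfloor}}$. *)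

theory Defs
  imports Main
begin

definition qpoch :: "'a::comm_ring_1 \<Rightarrow> 'a \<Rightarrow> nat \<Rightarrow> 'a" where
  "qpoch x q n = (\<Prod>j<n. (1 - q ^ j * x))"

definition gbinom :: "'a::field \<Rightarrow> nat \<Rightarrow> nat \<Rightarrow> 'a" where
  "gbinom q n j = (if j \<le> n then qpoch q q n / (qpoch q q j * qpoch q q (n - j)) else 0)"

definition rs_f :: "nat \<Rightarrow> 'a::field \<Rightarrow> 'a \<Rightarrow> 'a" where
  "rs_f n s q = (\<Sum>j\<le>n. s ^ j * gbinom (q^2) n j) / qpoch (- q) q n"

definition rs_F :: "nat \<Rightarrow> 'a::field \<Rightarrow> 'a \<Rightarrow> 'a" where
  "rs_F n s q = (\<Sum>j\<le>n. (- s) ^ j * gbinom q n j) / qpoch q (q^2) ((n + 1) div 2)"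

end

theory Submission imports Defs "HOL-Computational_Algebra.Formal_Power_Series" begin
unbundle fps_syntax

definition sc :: "'a::comm_ring_1 \<Rightarrow> 'a fps \<Rightarrow> 'a fps" where
  "sc c f = Abs_fps (\<lambda>n. c^n * f $ n)"

lemma sc_nth[simp]: "sc c f $ n = c^n * f $ n" by (simp add: sc_def)

lemma sc_mult: "sc c (f * g) = sc c f * sc c g"
proof (rule fps_ext)
  fix n
  have "sc c (f*g) $ n = (\<Sum>i=0..n. c^n * (f $ i * g $ (n-i)))"
    by (simp add: fps_mult_nth sum_distrib_left)
  also have "\<dots> = (\<Sum>i=0..n. (c^i * f $ i) * (c^(n-i) * g $ (n-i)))"
  proof (rule sum.cong)
    fix i assume "i \<in> {0..n}"
    then have "c^n = c^i * c^(n-i)" by (simp flip: power_add)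
    then show "c^n * (f $ i * g $ (n-i)) = (c^i * f $ i) * (c^(n-i) * g $ (n-i))" by (simp add: algebra_simps)
  qed simp
  also have "\<dots> = (sc c f * sc c g) $ n" by (simp add: fps_mult_nth)
  finally show "sc c (f*g) $ n = (sc c f * sc c g) $ n" .
qed

lemma sc_sc: "sc a (sc b f) = sc (a*b) f"
  by (rule fps_ext) (simp add: power_mult_distrib)

lemma sc_lin: "sc c (1 - fps_const a * fps_X) = 1 - fps_const (a*c) * fps_X"
  by (rule fps_ext) (auto simp: fps_X_def)

lemma rec_fe:
  fixes f :: "'a::comm_ring_1 fps"
  assumes "\<And>m. f $ (Suc m) * (1 - c^(Suc m)) = (b - a*c^m) * f $ m"
  shows "(1 - fps_const a * fps_X) * sc c f = (1 - fps_const b * fps_X) * f"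
proof (rule fps_ext)
  fix n show "((1 - fps_const a * fps_X) * sc c f) $ n = ((1 - fps_const b * fps_X) * f) $ n"
  proof (cases n)
    case 0 then show ?thesis by simp
  next
    case (Suc m)
    have e1: "((1 - fps_const a * fps_X) * sc c f) $ Suc m = c^Suc m * f $ Suc m - a * (c^m * f $ m)"
      by (simp add: algebra_simps mult.assoc)
    have e2: "((1 - fps_const b * fps_X) * f) $ Suc m = f $ Suc m - b * f $ m"
      by (simp add: algebra_simps mult.assoc)
    have "c^Suc m * f $ Suc m - a * (c^m * f $ m) = f $ Suc m - b * f $ m"
      using assms[of m] by (simp add: algebra_simps)
    then show ?thesis using e1 e2 Suc by simp
  qed
qed

lemma fps_unique:
  fixes f g P :: "'a::field fps"
  assumes "sc c f = P * f" "sc c g = P * g" "P $ 0 = 1" "f $ 0 = g $ 0"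
    and "\<And>n. n > 0 \<Longrightarrow> c^n \<noteq> 1"
  shows "f = g"
proof -
  define h where "h = f - g"
  have h: "sc c h = P * h" using assms(1,2)
    by (simp add: h_def fps_eq_iff algebra_simps fps_mult_nth sum_subtractf[symmetric] right_diff_distrib)
  have "h $ n = 0" for n
  proof (induction n rule: less_induct)
    case (less n)
    show ?case
    proof (cases n)
      case 0 then show ?thesis using assms(4) by (simp add: h_def)
    next
      case (Suc m)
      have "(P*h) $ n = (\<Sum>i=0..n. P $ i * h $ (n-i))" by (simp add: fps_mult_nth)
      also have "\<dots> = P $ 0 * h $ n + (\<Sum>i=1..n. P $ i * h $ (n-i))"
        using Suc by (simp add: sum.atLeast_Suc_atMost)
      also have "(\<Sum>i=1..n. P $ i * h $ (n-i)) = 0"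
        by (rule sum.neutral) (use less Suc in auto)
      finally have "c^n * h $ n = h $ n" using h assms(3) by (metis add_0_right mult_1 sc_nth)
      then have "(c^n - 1) * h $ n = 0" by (simp add: algebra_simps)
      moreover have "c^n - 1 \<noteq> 0" using assms(5)[of n] Suc by simp
      ultimately show ?thesis by simp
    qed
  qed
  then have "h = 0" by (simp add: fps_eq_iff)
  then show ?thesis by (simp add: h_def)
qed

lemma sign_prod: "(-1)^j * (\<Prod>i<j. a i - (s::'a::comm_ring_1)) = (\<Prod>i<j. s - a i)"
  by (induction j) (simp_all add: algebra_simps)

lemma sum_split2: "(\<Sum>i\<le>2*(N::nat). f i) = (\<Sum>k\<le>N. f (2*k)) + (\<Sum>k<N. (f (2*k+1)::'a::comm_monoid_add))"
proof (induction N)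
  case (Suc N)
  have e: "2 * Suc N = Suc (Suc (2*N))" by simp
  show ?case unfolding e sum.atMost_Suc using Suc by (simp add: algebra_simps)
qed simp

lemma qpoch_Suc: "qpoch x c (Suc n) = qpoch x c n * (1 - c^n * x)"
  by (simp add: qpoch_def)

lemma qpoch_0[simp]: "qpoch x c 0 = 1" by (simp add: qpoch_def)

definition EE :: "'a::field \<Rightarrow> 'a \<Rightarrow> 'a fps" where
  "EE c x = Abs_fps (\<lambda>n. x^n / qpoch c c n)"
definition GG :: "'a::field \<Rightarrow> 'a \<Rightarrow> 'a fps" where
  "GG q s = Abs_fps (\<lambda>j. (\<Prod>i<j. s - q^(2*i+1)) / qpoch (q^2) (q^2) j)"
definition CC :: "'a::field \<Rightarrow> 'a \<Rightarrow> 'a fps" where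
  "CC q s = Abs_fps (\<lambda>m. (\<Prod>j<m. q^j - s) / qpoch q q m)"
definition DD :: "'a::field \<Rightarrow> 'a fps" where
  "DD q = Abs_fps (\<lambda>m. if even m then 1 / qpoch (q^2) (q^2) (m div 2) else 0)"

lemma EE_fe:
  fixes c x :: "'a::field"
  assumes nz: "\<And>n. qpoch c c n \<noteq> 0"
  shows "sc c (EE c x) = (1 - fps_const x * fps_X) * EE c x"
proof -
  have "(1 - fps_const 0 * fps_X) * sc c (EE c x) = (1 - fps_const x * fps_X) * EE c x"
  proof (rule rec_fe)
    fix m
    have h: "qpoch c c (Suc m) = qpoch c c m * (1 - c^Suc m)" by (simp add: qpoch_Suc mult.commute)
    have z: "1 - c^Suc m \<noteq> 0" using nz[of "Suc m"] h by auto
    have "EE c x $ Suc m = EE c x $ m * x / (1 - c^Suc m)"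
      unfolding EE_def fps_nth_Abs_fps h by (simp add: field_simps)
    then show "EE c x $ Suc m * (1 - c ^ Suc m) = (x - 0 * c ^ m) * EE c x $ m"
      using z by (simp add: field_simps)
  qed
  then show ?thesis by simp
qed

context
  fixes q :: "'a::field"
  assumes gen: "\<And>m. m > 0 \<Longrightarrow> q ^ m \<noteq> 1"
begin

lemma qq_nz: "qpoch q q n \<noteq> 0"
proof -
  have "1 - q^j * q \<noteq> 0" for j using gen[of "Suc j"] by (simp add: mult.commute)
  then show ?thesis by (simp add: qpoch_def)
qed

lemma pw1: "(q^2)^j * q^2 = q^(2*j+2)" by (simp only: power_add power_mult)
lemma pw2: "(q^2)^j * q = q^(2*j+1)" by (simp add: power_add power_mult)
lemma pw3: "q^(2*j) = (q^2)^j" by (simp add: power_mult)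

lemma pp_nz: "qpoch (q^2) (q^2) n \<noteq> 0"
proof -
  have "1 - (q^2)^j * q^2 \<noteq> 0" for j using gen[of "2*j+2"] unfolding pw1 by simp
  then show ?thesis by (simp add: qpoch_def)
qed

lemma mq_nz: "qpoch (-q) q n \<noteq> 0"
proof -
  have "1 - q^j * (-q) \<noteq> 0" for j
  proof
    assume "1 - q^j * (-q) = 0"
    then have "q^(Suc j) = -1" by (simp add: algebra_simps eq_neg_iff_add_eq_0)
    then have "(q^(Suc j))^2 = 1" by simp
    then have "q^(2*Suc j) = 1" by (metis power_mult mult.commute)
    with gen[of "2*Suc j"] show False by simp
  qed
  then show ?thesis by (simp add: qpoch_def)
qed

lemma qp_nz: "qpoch q (q^2) n \<noteq> 0"
proof -
  have "1 - (q^2)^j * q \<noteq> 0" for j using gen[of "2*j+1"] unfolding pw2 by simp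
  then show ?thesis by (simp add: qpoch_def)
qed

lemma gen2: "n > 0 \<Longrightarrow> (q^2)^n \<noteq> 1"
  using gen[of "2*n"] by (simp add: power_mult)

lemma mq_qq: "qpoch (-q) q n * qpoch q q n = qpoch (q^2) (q^2) n"
proof (induction n)
  case (Suc n)
  have "(1 - q^n * (-q)) * (1 - q^n * q) = 1 - (q^2)^n * q^2"
    by (simp add: algebra_simps power2_eq_square power_mult_distrib)
  then show ?case using Suc by (simp add: qpoch_Suc) (metis (no_types, lifting) mult.assoc mult.left_commute)
qed simp

lemma qq_even: "qpoch q q (2*k) = qpoch q (q^2) k * qpoch (q^2) (q^2) k"
proof (induction k)
  case (Suc k)
  have e: "2 * Suc k = Suc (Suc (2*k))" by simp
  have "qpoch q q (2 * Suc k) = qpoch q q (2*k) * (1 - q^(2*k) * q) * (1 - q^(Suc (2*k)) * q)"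
    unfolding e qpoch_Suc by simp
  also have "q^(2*k) * q = (q^2)^k * q" by (simp add: pw3)
  also have "q^(Suc (2*k)) * q = (q^2)^k * q^2" by (simp add: pw1)
  finally show ?case using Suc by (simp add: qpoch_Suc algebra_simps)
qed simp

lemma qq_odd: "qpoch q q (2*k+1) = qpoch q (q^2) (k+1) * qpoch (q^2) (q^2) k"
proof -
  have "qpoch q q (2*k+1) = qpoch q q (2*k) * (1 - q^(2*k) * q)" by (simp add: qpoch_Suc)
  also have "q^(2*k) * q = (q^2)^k * q" by (simp add: pw3)
  finally show ?thesis using qq_even[of k] by (simp add: qpoch_Suc algebra_simps)
qed

lemma GG_fe: "(1 - fps_const q * fps_X) * sc (q^2) (GG q s) = (1 - fps_const s * fps_X) * GG q s"
proof (rule rec_fe)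
  fix m
  have h: "qpoch (q^2) (q^2) (Suc m) = qpoch (q^2) (q^2) m * (1 - (q^2)^Suc m)" by (simp add: qpoch_Suc mult.commute)
  have z: "1 - (q^2)^Suc m \<noteq> 0" using gen2[of "Suc m"] by auto
  have "GG q s $ Suc m = GG q s $ m * (s - q^(2*m+1)) / (1 - (q^2)^Suc m)"
    unfolding GG_def fps_nth_Abs_fps h prod.lessThan_Suc by (simp add: field_simps)
  moreover have qe: "q * (q^2)^m = q^(2*m+1)" using pw2[of m] by (simp add: mult.commute)
  ultimately show "GG q s $ Suc m * (1 - (q^2) ^ Suc m) = (s - q * (q^2) ^ m) * GG q s $ m"
    unfolding qe using z by (simp add: field_simps)
qed

lemma CC_fe: "(1 - fps_const (-1) * fps_X) * sc q (CC q s) = (1 - fps_const (-s) * fps_X) * CC q s"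
proof (rule rec_fe)
  fix m
  have h: "qpoch q q (Suc m) = qpoch q q m * (1 - q^Suc m)" by (simp add: qpoch_Suc mult.commute)
  have z: "1 - q^Suc m \<noteq> 0" using gen[of "Suc m"] by auto
  have "CC q s $ Suc m = CC q s $ m * (q^m - s) / (1 - q^Suc m)"
    unfolding CC_def fps_nth_Abs_fps h prod.lessThan_Suc by (simp add: field_simps)
  then show "CC q s $ Suc m * (1 - q ^ Suc m) = (- s - (-1) * q ^ m) * CC q s $ m"
    using z by (simp add: field_simps)
qed

lemma DD_fe: "sc q (DD q) = (1 - fps_X^2) * DD q"
proof (rule fps_ext)
  fix n
  show "sc q (DD q) $ n = ((1 - fps_X^2) * DD q) $ n"
  proof (cases n)
    case 0 then show ?thesis by (simp add: DD_def)
  next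
    case (Suc m) note Sm = Suc
    show ?thesis
    proof (cases m)
      case 0 then show ?thesis using Sm by (simp add: DD_def algebra_simps fps_X_power_mult_nth)
    next
      case (Suc k)
      have r: "((1 - fps_X^2) * DD q) $ n = DD q $ n - DD q $ k"
        using Sm Suc fps_X_power_mult_nth[of 2 "DD q" n] by (simp add: algebra_simps)
      show ?thesis
      proof (cases "even k")
        case True
        then obtain j where j: "k = 2*j" by auto
        have nn: "n = 2*(Suc j)" using Sm Suc j by simp
        have "qpoch (q^2) (q^2) (Suc j) = qpoch (q^2) (q^2) j * (1 - (q^2)^Suc j)" by (simp add: qpoch_Suc mult.commute)
        moreover have "q^n = (q^2)^Suc j" by (simp only: nn power_mult)
        ultimately show ?thesis unfolding r using pp_nz[of j] pp_nz[of "Suc j"] nn j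
          by (simp add: DD_def field_simps)
      next
        case False
        then show ?thesis unfolding r using Sm Suc by (simp add: DD_def)
      qed
    qed
  qed
qed

lemma part1_fps: "GG q s * EE q 1 = EE (q^2) s * EE (q^2) 1"
proof (rule fps_unique[of "q^2" _ "(1 - fps_const s * fps_X) * (1 - fps_const 1 * fps_X)"])
  have e1: "sc q (EE q 1) = (1 - fps_const 1 * fps_X) * EE q 1" by (rule EE_fe) (rule qq_nz)
  have "sc (q^2) (EE q 1) = sc q (sc q (EE q 1))" by (simp add: sc_sc power2_eq_square)
  also have "\<dots> = (1 - fps_const q * fps_X) * ((1 - fps_const 1 * fps_X) * EE q 1)"
    unfolding e1 sc_mult sc_lin by simp
  finally have e2: "sc (q^2) (EE q 1) = (1 - fps_const q * fps_X) * ((1 - fps_const 1 * fps_X) * EE q 1)" .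
  show "sc (q^2) (GG q s * EE q 1) = (1 - fps_const s * fps_X) * (1 - fps_const 1 * fps_X) * (GG q s * EE q 1)"
    unfolding sc_mult e2
    by (metis (no_types, lifting) GG_fe mult.assoc mult.left_commute)
  have f1: "sc (q^2) (EE (q^2) s) = (1 - fps_const s * fps_X) * EE (q^2) s" by (rule EE_fe) (rule pp_nz)
  have f2: "sc (q^2) (EE (q^2) 1) = (1 - fps_const 1 * fps_X) * EE (q^2) 1" by (rule EE_fe) (rule pp_nz)
  show "sc (q^2) (EE (q^2) s * EE (q^2) 1) = (1 - fps_const s * fps_X) * (1 - fps_const 1 * fps_X) * (EE (q^2) s * EE (q^2) 1)"
    unfolding sc_mult f1 f2 by (simp add: algebra_simps)
  show "((1 - fps_const s * fps_X) * (1 - fps_const 1 * fps_X)) $ 0 = (1::'a)" by simp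
  show "(GG q s * EE q 1) $ 0 = (EE (q^2) s * EE (q^2) 1) $ 0" by (simp add: GG_def EE_def)
  show "\<And>n. 0 < n \<Longrightarrow> (q^2)^n \<noteq> 1" by (rule gen2)
qed

lemma part2_fps: "CC q s * DD q = EE q (-s) * EE q 1"
proof (rule fps_unique[of q _ "(1 - fps_const (-s) * fps_X) * (1 - fps_const 1 * fps_X)"])
  define A :: "'a fps" where "A = 1 - fps_const (-1) * fps_X"
  have A0: "A \<noteq> 0" proof assume "A = 0" then have "A $ 0 = 0" by simp then show False by (simp add: A_def) qed
  have AL: "1 - fps_X^2 = A * (1 - fps_const 1 * fps_X)"
    by (simp add: A_def algebra_simps power2_eq_square fps_const_neg[symmetric])
  have "A * sc q (CC q s * DD q) = A * ((1 - fps_const (-s) * fps_X) * (1 - fps_const 1 * fps_X) * (CC q s * DD q))"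
    unfolding sc_mult DD_fe AL
    using CC_fe[of s, folded A_def] by (metis (no_types, lifting) mult.assoc mult.left_commute)
  with A0 show "sc q (CC q s * DD q) = (1 - fps_const (-s) * fps_X) * (1 - fps_const 1 * fps_X) * (CC q s * DD q)"
    by simp
  have f1: "sc q (EE q (-s)) = (1 - fps_const (-s) * fps_X) * EE q (-s)" by (rule EE_fe) (rule qq_nz)
  have f2: "sc q (EE q 1) = (1 - fps_const 1 * fps_X) * EE q 1" by (rule EE_fe) (rule qq_nz)
  show "sc q (EE q (-s) * EE q 1) = (1 - fps_const (-s) * fps_X) * (1 - fps_const 1 * fps_X) * (EE q (-s) * EE q 1)"
    unfolding sc_mult f1 f2 by (simp add: algebra_simps)
  show "((1 - fps_const (-s) * fps_X) * (1 - fps_const 1 * fps_X)) $ 0 = (1::'a)" by simp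
  show "(CC q s * DD q) $ 0 = (EE q (-s) * EE q 1) $ 0" by (simp add: CC_def DD_def EE_def)
  show "\<And>n. 0 < n \<Longrightarrow> q^n \<noteq> 1" by (rule gen)
qed

lemma part1_L: "rs_f n s q = qpoch q q n * (EE (q^2) s * EE (q^2) 1) $ n"
proof -
  have "(\<Sum>j\<le>n. s^j * gbinom (q^2) n j) = (\<Sum>j\<le>n. qpoch (q^2) (q^2) n * (EE (q^2) s $ j * EE (q^2) 1 $ (n-j)))"
    by (rule sum.cong) (use pp_nz in \<open>auto simp: gbinom_def EE_def field_simps\<close>)
  also have "\<dots> = qpoch (q^2) (q^2) n * (EE (q^2) s * EE (q^2) 1) $ n"
    by (simp add: fps_mult_nth atLeast0AtMost sum_distrib_left)
  finally show ?thesis unfolding rs_f_def using mq_nz[of n] by (simp flip: mq_qq)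
qed

lemma part1_R: "(\<Sum>j\<le>n. (-1) ^ j * gbinom q n j * (\<Prod>i<j. (q ^ (2*i+1) - s)) / qpoch (- q) q j)
   = qpoch q q n * (GG q s * EE q 1) $ n"
proof -
  have "(\<Sum>j\<le>n. (-1) ^ j * gbinom q n j * (\<Prod>i<j. (q ^ (2*i+1) - s)) / qpoch (- q) q j)
     = (\<Sum>j\<le>n. qpoch q q n * (GG q s $ j * EE q 1 $ (n-j)))"
  proof (rule sum.cong)
    fix j assume "j \<in> {..n}"
    then have jn: "j \<le> n" by simp
    have "(-1) ^ j * gbinom q n j * (\<Prod>i<j. (q ^ (2*i+1) - s)) / qpoch (- q) q j
      = gbinom q n j * ((-1) ^ j * (\<Prod>i<j. (q ^ (2*i+1) - s))) / qpoch (- q) q j" by simp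
    also have "\<dots> = gbinom q n j * (\<Prod>i<j. s - q ^ (2*i+1)) / qpoch (- q) q j"
      by (simp only: sign_prod)
    also have "\<dots> = qpoch q q n * (GG q s $ j * EE q 1 $ (n-j))"
      using jn qq_nz mq_nz pp_nz unfolding gbinom_def GG_def EE_def
      by (simp add: field_simps flip: mq_qq)
    finally show "(-1) ^ j * gbinom q n j * (\<Prod>i<j. (q ^ (2*i+1) - s)) / qpoch (- q) q j
      = qpoch q q n * (GG q s $ j * EE q 1 $ (n-j))" .
  qed simp
  also have "\<dots> = qpoch q q n * (GG q s * EE q 1) $ n"
    by (simp add: fps_mult_nth atLeast0AtMost sum_distrib_left)
  finally show ?thesis .
qed

lemma part2_L: "(\<Sum>j\<le>n. (- s) ^ j * gbinom q n j) = qpoch q q n * (EE q (-s) * EE q 1) $ n"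
proof -
  have "(\<Sum>j\<le>n. (- s) ^ j * gbinom q n j) = (\<Sum>j\<le>n. qpoch q q n * (EE q (-s) $ j * EE q 1 $ (n-j)))"
    by (rule sum.cong) (use qq_nz in \<open>auto simp: gbinom_def EE_def field_simps\<close>)
  also have "\<dots> = qpoch q q n * (EE q (-s) * EE q 1) $ n"
    by (simp add: fps_mult_nth atLeast0AtMost sum_distrib_left)
  finally show ?thesis .
qed

lemma DD_even: "k \<le> N \<Longrightarrow> DD q $ (2*N - 2*k) = 1 / qpoch (q^2) (q^2) (N - k)"
proof -
  assume "k \<le> N"
  then have "2*N - 2*k = 2*(N-k)" by simp
  then show ?thesis by (simp add: DD_def)
qed

lemma DD_odd: "k < N \<Longrightarrow> DD q $ (2*N - (2*k+1)) = 0"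
proof -
  assume "k < N"
  then have "odd (2*N - (2*k+1))" by presburger
  then show ?thesis by (simp add: DD_def)
qed

lemma DD_odd2: "k \<le> N \<Longrightarrow> DD q $ (2*N + 1 - 2*k) = 0"
proof -
  assume "k \<le> N"
  then have "odd (2*N + 1 - 2*k)" by presburger
  then show ?thesis by (simp add: DD_def)
qed

lemma DD_even2: "k \<le> N \<Longrightarrow> DD q $ (2*N + 1 - (2*k+1)) = 1 / qpoch (q^2) (q^2) (N - k)"
proof -
  assume "k \<le> N"
  then have "2*N + 1 - (2*k+1) = 2*(N-k)" by simp
  then show ?thesis by (simp add: DD_def)
qed

lemma part2_R_even: "(\<Sum>k\<le>N. gbinom (q^2) N k * (\<Prod>j<2*k. (q ^ j - s)) / qpoch q (q^2) k)
   = qpoch (q^2) (q^2) N * (CC q s * DD q) $ (2*N)"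
proof -
  have "(CC q s * DD q) $ (2*N) = (\<Sum>i\<le>2*N. CC q s $ i * DD q $ (2*N - i))"
    by (simp add: fps_mult_nth atLeast0AtMost)
  also have "\<dots> = (\<Sum>k\<le>N. CC q s $ (2*k) * DD q $ (2*N - 2*k))"
    unfolding sum_split2 using DD_odd by simp
  also have "\<dots> = (\<Sum>k\<le>N. CC q s $ (2*k) / qpoch (q^2) (q^2) (N - k))"
    by (rule sum.cong) (simp_all add: DD_even)
  finally have z: "(CC q s * DD q) $ (2*N) = \<dots>" .
  show ?thesis unfolding z sum_distrib_left
  proof (rule sum.cong)
    fix k assume "k \<in> {..N}"
    then have kn: "k \<le> N" by simp
    show "gbinom (q^2) N k * (\<Prod>j<2*k. (q ^ j - s)) / qpoch q (q^2) k =
      qpoch (q^2) (q^2) N * (CC q s $ (2*k) / qpoch (q^2) (q^2) (N - k))"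
      using kn pp_nz qp_nz unfolding gbinom_def CC_def fps_nth_Abs_fps qq_even
      by (simp add: field_simps)
  qed simp
qed

lemma part2_R_odd: "(\<Sum>k\<le>N. gbinom (q^2) N k * (\<Prod>j<2*k+1. (q ^ j - s)) / qpoch q (q^2) (k+1))
   = qpoch (q^2) (q^2) N * (CC q s * DD q) $ (2*N+1)"
proof -
  have "(CC q s * DD q) $ (2*N+1) = (\<Sum>i\<le>Suc (2*N). CC q s $ i * DD q $ (2*N + 1 - i))"
    by (simp add: fps_mult_nth atLeast0AtMost)
  also have "\<dots> = (\<Sum>k\<le>N. CC q s $ (2*k) * DD q $ (2*N + 1 - 2*k)) +
       (\<Sum>k<N. CC q s $ (2*k+1) * DD q $ (2*N + 1 - (2*k+1))) + CC q s $ (2*N+1) * DD q $ (2*N + 1 - (2*N+1))"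
    unfolding sum.atMost_Suc sum_split2 by simp
  also have "\<dots> = (\<Sum>k\<le>N. CC q s $ (2*k+1) * DD q $ (2*N + 1 - (2*k+1)))"
  proof -
    have "(\<Sum>k\<le>N. CC q s $ (2*k) * DD q $ (2*N + 1 - 2*k)) = 0"
      by (rule sum.neutral) (use DD_odd2 in auto)
    moreover have "(\<Sum>k\<le>N. CC q s $ (2*k+1) * DD q $ (2*N + 1 - (2*k+1))) =
       (\<Sum>k<N. CC q s $ (2*k+1) * DD q $ (2*N + 1 - (2*k+1))) + CC q s $ (2*N+1) * DD q $ (2*N + 1 - (2*N+1))"
      by (simp add: lessThan_Suc_atMost[symmetric])
    ultimately show ?thesis by simp
  qed
  also have "\<dots> = (\<Sum>k\<le>N. CC q s $ (2*k+1) / qpoch (q^2) (q^2) (N - k))"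
    by (rule sum.cong) (simp_all add: DD_even2 DD_even)
  finally have z: "(CC q s * DD q) $ (2*N+1) = \<dots>" .
  show ?thesis unfolding z sum_distrib_left
  proof (rule sum.cong)
    fix k assume "k \<in> {..N}"
    then have kn: "k \<le> N" by simp
    show "gbinom (q^2) N k * (\<Prod>j<2*k+1. (q ^ j - s)) / qpoch q (q^2) (k+1) =
      qpoch (q^2) (q^2) N * (CC q s $ (2*k+1) / qpoch (q^2) (q^2) (N - k))"
      using kn pp_nz qp_nz unfolding gbinom_def CC_def fps_nth_Abs_fps qq_odd
      by (simp add: field_simps)
  qed simp
qed

end


theorem theorem2p1:
  fixes q s :: "'a::field" and n :: nat
  assumes generic: "\<forall>m::nat. m > 0 \<longrightarrow> q ^ m \<noteq> 1"
  shows "(rs_f n s q =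
           (\<Sum>j\<le>n. (-1) ^ j * gbinom q n j * (\<Prod>i<j. (q ^ (2*i+1) - s)) / qpoch (- q) q j)) \<and>
         (rs_F (2*n) s q =
           (\<Sum>k\<le>n. gbinom (q^2) n k * (\<Prod>j<2*k. (q ^ j - s)) / qpoch q (q^2) k)) \<and>
         (rs_F (2*n+1) s q =
           (\<Sum>k\<le>n. gbinom (q^2) n k * (\<Prod>j<2*k+1. (q ^ j - s)) / qpoch q (q^2) (k+1)))"
proof -
  have g: "\<And>m. m > 0 \<Longrightarrow> q ^ m \<noteq> 1" using generic by blast
  have A: "rs_f n s q =
           (\<Sum>j\<le>n. (-1) ^ j * gbinom q n j * (\<Prod>i<j. (q ^ (2*i+1) - s)) / qpoch (- q) q j)"
    by (simp only: part1_L[OF g] part1_R[OF g] part1_fps[OF g])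
  have e1: "(2*n+1) div 2 = n" by simp
  have e2: "(2*n+1+1) div 2 = n+1" by simp
  have B: "rs_F (2*n) s q =
           (\<Sum>k\<le>n. gbinom (q^2) n k * (\<Prod>j<2*k. (q ^ j - s)) / qpoch q (q^2) k)"
  proof -
    have "rs_F (2*n) s q = (\<Sum>j\<le>2*n. (- s) ^ j * gbinom q (2*n) j) / qpoch q (q^2) n"
      unfolding rs_F_def e1 ..
    also have "\<dots> = qpoch q q (2*n) * (EE q (-s) * EE q 1) $ (2*n) / qpoch q (q^2) n"
      using part2_L[OF g] by simp
    also have "\<dots> = qpoch (q^2) (q^2) n * (CC q s * DD q) $ (2*n)"
      using qp_nz[OF g, of n] by (simp add: qq_even[OF g] part2_fps[OF g])
    also have "\<dots> = (\<Sum>k\<le>n. gbinom (q^2) n k * (\<Prod>j<2*k. (q ^ j - s)) / qpoch q (q^2) k)"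
      using part2_R_even[OF g] by simp
    finally show ?thesis .
  qed
  have C: "rs_F (2*n+1) s q =
           (\<Sum>k\<le>n. gbinom (q^2) n k * (\<Prod>j<2*k+1. (q ^ j - s)) / qpoch q (q^2) (k+1))"
  proof -
    have "rs_F (2*n+1) s q = (\<Sum>j\<le>2*n+1. (- s) ^ j * gbinom q (2*n+1) j) / qpoch q (q^2) (n+1)"
      unfolding rs_F_def e2 ..
    also have "\<dots> = qpoch q q (2*n+1) * (EE q (-s) * EE q 1) $ (2*n+1) / qpoch q (q^2) (n+1)"
      using part2_L[OF g] by simp
    also have "\<dots> = qpoch (q^2) (q^2) n * (CC q s * DD q) $ (2*n+1)"
      using qq_odd[OF g, of n] qp_nz[OF g, of "n+1"] by (simp add: part2_fps[OF g])
    also have "\<dots> = (\<Sum>k\<le>n. gbinom (q^2) n k * (\<Prod>j<2*k+1. (q ^ j - s)) / qpoch q (q^2) (k+1))"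
      using part2_R_odd[OF g] by simp
    finally show ?thesis .
  qed
  from A B C show ?thesis by blast
qed

end
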